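(* Let $W\ge1$ be an integer, $\xi\in\mathbb Z$ and $r\ge1$ an integer. For the one-dimensional band graph $\Gamma_{1,W}$, the Green's function $G_r$ of $B_r(\xi)$ satisfies, for all $x\in B_r(\xi)$, $$\frac1{2W^3}\big(rW+1-|x-\xi|\big)\le G_r(\xi,x)\le\frac1{W^2}\big(W+rW-|x-\xi|\big),$$ and the Poisson kernel satisfies, for all $x\in\partial B_r(\xi)$, $$\frac1{2W^3}\le P_r(\xi,x)\le1.$$
   Context: $\Gamma_{1,W}$ has vertex set $\mathbb Z$ with $x\sim y$ iff $0<|x-y|\le W$ (each vertex has degree $2W$). $B_r(\xi)=\{x\in\mathbb Z:|x-\xi|\le rW\}$ and $\partial B_r(\xi)=\{x:rW<|x-\xi|\le(r+1)W\}$. The Dirichlet Laplacian $-\Delta^{B_r}$ is the matrix on $\ell^2(B_r(\xi))$ with entries $2W\delta_{xy}-\mathbf 1_{0<|x-y|\le W}$, $x,y\in B_r(\xi)$; $G_r(x,y)=(-\Delta^{B_r})^{-1}(x,y)$ for $x,y\in B_r(\xi)$. The Poisson kernel is $P_r(\xi,x)=\sum_{y\in B_r(\xi),\,0<|x-y|\le W}G_r(\xi,y)$ for $x\in\partial B_r(\xi)$ (equivalently, $P_r(\cdot,x)$ is the harmonic function on $B_r(\xi)$ with boundary values $\delta_x$ on $\partial B_r(\xi)$). *)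

theory Defs
  imports "HOL-Analysis.Analysis"
begin

text \<open>Band graph Gamma_{1,W} on the integers: x ~ y iff 0 < |x - y| <= W.\<close>

definition band_ball :: "int \<Rightarrow> int \<Rightarrow> int \<Rightarrow> int set" where
  "band_ball W r \<xi> = {x. \<bar>x - \<xi>\<bar> \<le> r * W}"

definition band_boundary :: "int \<Rightarrow> int \<Rightarrow> int \<Rightarrow> int set" where
  "band_boundary W r \<xi> = {x. r * W < \<bar>x - \<xi>\<bar> \<and> \<bar>x - \<xi>\<bar> \<le> (r + 1) * W}"

definition dir_lap :: "int \<Rightarrow> int \<Rightarrow> int \<Rightarrow> real" where
  "dir_lap W x y = (if x = y then 2 * real_of_int W
                    else if 0 < \<bar>x - y\<bar> \<and> \<bar>x - y\<bar> \<le> W then -1 else 0)"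

definition mat_inv_on :: "int set \<Rightarrow> (int \<Rightarrow> int \<Rightarrow> real) \<Rightarrow> (int \<Rightarrow> int \<Rightarrow> real)" where
  "mat_inv_on B M = (THE G. (\<forall>x\<in>B. \<forall>y\<in>B. (\<Sum>z\<in>B. M x z * G z y) = (if x = y then 1 else 0))
                          \<and> (\<forall>x y. x \<notin> B \<or> y \<notin> B \<longrightarrow> G x y = 0))"

text \<open>Green's function G_r = (-Delta^{B_r})^{-1}.\<close>
definition green :: "int \<Rightarrow> int \<Rightarrow> int \<Rightarrow> int \<Rightarrow> int \<Rightarrow> real" where
  "green W r \<xi> = mat_inv_on (band_ball W r \<xi>) (dir_lap W)"

definition poisson :: "int \<Rightarrow> int \<Rightarrow> int \<Rightarrow> int \<Rightarrow> real" where
  "poisson W r \<xi> x = (\<Sum>y\<in>{y\<in>band_ball W r \<xi>. 0 < \<bar>x - y\<bar> \<and> \<bar>x - y\<bar> \<le> W}. green W r \<xi> \<xi> y)"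

end

theory Submission imports Defs "Jordan_Normal_Form.Determinant" begin


definition Lop :: "int set \<Rightarrow> int \<Rightarrow> (int \<Rightarrow> real) \<Rightarrow> int \<Rightarrow> real" where
 "Lop B W h x = (\<Sum>z\<in>B. dir_lap W x z * h z)"

definition ind :: "int set \<Rightarrow> (int \<Rightarrow> real) \<Rightarrow> int \<Rightarrow> real" where
 "ind B h z = (if z \<in> B then h z else 0)"

lemma shift_plus: "(\<Sum>z\<in>{x+1..x+W}. F z) = (\<Sum>d\<in>{1..W}. F (x+d))" for x W :: int
proof -
  have "(\<Sum>z\<in>{x+1..x+W}. F z) = (\<Sum>z\<in>(\<lambda>d. x+d) ` {1..W}. F z)"
    using image_add_atLeastAtMost[of x 1 W] by (simp add: add.commute)
  also have "\<dots> = (\<Sum>d\<in>{1..W}. F (x+d))"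
    by (rule sum.reindex_cong[where l="\<lambda>d. x+d"]) (auto simp: inj_on_def)
  finally show ?thesis .
qed

lemma shift_minus: "(\<Sum>z\<in>{x-W..x-1}. F z) = (\<Sum>d\<in>{1..W}. F (x-d))" for x W :: int
proof -
  have "(\<Sum>z\<in>{x-W..x-1}. F z) = (\<Sum>z\<in>(\<lambda>d. x-d) ` {1..W}. F z)"
    using image_diff_atLeastAtMost[of x 1 W] by simp
  also have "\<dots> = (\<Sum>d\<in>{1..W}. F (x-d))"
    by (rule sum.reindex_cong[where l="\<lambda>d. x-d"]) (auto simp: inj_on_def)
  finally show ?thesis .
qed

lemma nb_split:
  assumes "finite B"
  shows "(\<Sum>z\<in>{z\<in>B. 0 < \<bar>x - z\<bar> \<and> \<bar>x - z\<bar> \<le> W}. h z)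
       = (\<Sum>d\<in>{1..W}. ind B h (x+d) + ind B h (x-d))"
proof -
  have e: "{z\<in>B. 0 < \<bar>x - z\<bar> \<and> \<bar>x - z\<bar> \<le> W} = ({x+1..x+W} \<inter> B) \<union> ({x-W..x-1} \<inter> B)"
    by auto
  have "(\<Sum>z\<in>{z\<in>B. 0 < \<bar>x - z\<bar> \<and> \<bar>x - z\<bar> \<le> W}. h z)
      = (\<Sum>z\<in>{x+1..x+W} \<inter> B. h z) + (\<Sum>z\<in>{x-W..x-1} \<inter> B. h z)"
    unfolding e by (rule sum.union_disjoint) (auto simp: assms)
  also have "(\<Sum>z\<in>{x+1..x+W} \<inter> B. h z) = (\<Sum>z\<in>{x+1..x+W}. ind B h z)"
    by (simp add: ind_def sum.inter_restrict)
  also have "(\<Sum>z\<in>{x-W..x-1} \<inter> B. h z) = (\<Sum>z\<in>{x-W..x-1}. ind B h z)"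
    by (simp add: ind_def sum.inter_restrict)
  finally show ?thesis by (simp add: shift_plus shift_minus sum.distrib)
qed

lemma lap_nb:
  assumes "finite B" "x \<in> B"
  shows "Lop B W h x = 2 * real_of_int W * h x - (\<Sum>z\<in>{z\<in>B. 0 < \<bar>x - z\<bar> \<and> \<bar>x - z\<bar> \<le> W}. h z)"
proof -
  have "Lop B W h x = dir_lap W x x * h x + (\<Sum>z\<in>B - {x}. dir_lap W x z * h z)"
    unfolding Lop_def using assms by (simp add: sum.remove)
  also have "(\<Sum>z\<in>B - {x}. dir_lap W x z * h z)
     = (\<Sum>z\<in>B - {x}. if 0 < \<bar>x - z\<bar> \<and> \<bar>x - z\<bar> \<le> W then - h z else 0)"
    by (rule sum.cong) (auto simp: dir_lap_def)
  also have "\<dots> = (\<Sum>z\<in>B. if 0 < \<bar>x - z\<bar> \<and> \<bar>x - z\<bar> \<le> W then - h z else 0)"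
    using sum.remove[OF assms, of "\<lambda>z. if 0 < \<bar>x - z\<bar> \<and> \<bar>x - z\<bar> \<le> W then - h z else 0"] by simp
  also have "\<dots> = (\<Sum>z\<in>{z\<in>B. 0 < \<bar>x - z\<bar> \<and> \<bar>x - z\<bar> \<le> W}. - h z)"
    by (rule sum.inter_filter[symmetric, OF assms(1)])
  finally show ?thesis by (simp add: dir_lap_def sum_negf)
qed

lemma lap_expand:
  assumes "finite B" "x \<in> B" "W \<ge> 0"
  shows "Lop B W h x = (\<Sum>d\<in>{1..W}. (h x - ind B h (x+d)) + (h x - ind B h (x-d)))"
proof -
  have c: "(\<Sum>d\<in>{1..W}. 2 * h x) = 2 * real_of_int W * h x"
  proof -
    have "(\<Sum>d\<in>{1..W}. 2 * h x) = real (card {1..W}) * (2 * h x)" by simp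
    also have "real (card {1..W}) = real_of_int W" using assms(3) by simp
    finally show ?thesis by simp
  qed
  have d: "(\<Sum>d\<in>{1..W}. (h x - ind B h (x+d)) + (h x - ind B h (x-d)))
     = (\<Sum>d\<in>{1..W}. 2 * h x) - (\<Sum>d\<in>{1..W}. ind B h (x+d) + ind B h (x-d))"
    by (subst sum_subtractf[symmetric]) (rule sum.cong; simp)
  show ?thesis
    unfolding lap_nb[OF assms(1,2)] nb_split[OF assms(1)] d c ..
qed

lemma maxprinc:
  assumes fin: "finite B" and W: "W \<ge> 1" and L: "\<forall>x\<in>B. Lop B W h x \<ge> 0"
  shows "\<forall>x\<in>B. h x \<ge> 0"
proof (rule ccontr)
  assume "\<not> ?thesis"
  then obtain x0 where x0: "x0\<in>B" "h x0 < 0" by auto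
  define m where "m = Min (h ` B)"
  have m_le: "\<forall>z\<in>B. m \<le> h z" using fin by (auto simp: m_def)
  have mB: "m \<in> h ` B" using fin x0 unfolding m_def by (intro Min_in) auto
  have mneg: "m < 0" using m_le x0 by force
  define S where "S = {z\<in>B. h z = m}"
  have S: "finite S" "S \<noteq> {}" using fin mB by (auto simp: S_def)
  define x where "x = Max S"
  have xS: "x \<in> S" using S by (simp add: x_def)
  have xmax: "\<forall>z\<in>S. z \<le> x" using S by (simp add: x_def)
  have xB: "x\<in>B" and hx: "h x = m" using xS S_def by auto
  have half: "\<And>z. h x - ind B h z \<le> 0" using m_le mneg hx by (auto simp: ind_def)
  have terms: "\<forall>d\<in>{1..W}. (h x - ind B h (x+d)) + (h x - ind B h (x-d)) \<le> 0"
  proof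
    fix d show "(h x - ind B h (x+d)) + (h x - ind B h (x-d)) \<le> 0"
      using half[of "x+d"] half[of "x-d"] by linarith
  qed
  have h1: "h x - ind B h (x-1) \<le> 0" using m_le mneg hx by (auto simp: ind_def)
  have h2: "h x - ind B h (x+1) < 0"
  proof (cases "x+1 \<in> B")
    case True
    have "x+1 \<notin> S" using xmax by force
    then have "h (x+1) \<noteq> m" using True S_def by auto
    with m_le True hx show ?thesis by (force simp: ind_def)
  next
    case False then show ?thesis using hx mneg by (simp add: ind_def)
  qed
  have "(\<Sum>d\<in>{1..W}. (h x - ind B h (x+d)) + (h x - ind B h (x-d))) < (\<Sum>d\<in>{1..W}. 0)"
    apply (rule sum_strict_mono_ex1)
    using terms h1 h2 W by (auto intro!: bexI[of _ 1])
  then have "Lop B W h x < 0" using lap_expand[OF fin xB] W by simp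
  with L xB show False by force
qed

lemma Lop_neg: "Lop B W (\<lambda>z. - h z) x = - Lop B W h x"
  by (simp add: Lop_def sum_negf)

lemma inj_Lop:
  assumes "finite B" "W \<ge> 1" "\<forall>x\<in>B. Lop B W h x = 0" shows "\<forall>x\<in>B. h x = 0"
proof -
  have "\<forall>x\<in>B. h x \<ge> 0" using maxprinc[OF assms(1,2)] assms(3) by simp
  moreover have "\<forall>x\<in>B. - h x \<ge> 0" using maxprinc[OF assms(1,2), of "\<lambda>z. - h z"] assms(3) Lop_neg by simp
  ultimately show ?thesis by force
qed

lemma inv_exists:
  fixes M :: "int \<Rightarrow> int \<Rightarrow> real"
  assumes fin: "finite B" and inj: "\<And>h. \<forall>x\<in>B. (\<Sum>z\<in>B. M x z * h z) = 0 \<Longrightarrow> \<forall>x\<in>B. h x = 0"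
  shows "\<exists>G. (\<forall>x\<in>B. \<forall>y\<in>B. (\<Sum>z\<in>B. M x z * G z y) = (if x = y then 1 else 0)) \<and> (\<forall>x y. x \<notin> B \<or> y \<notin> B \<longrightarrow> G x y = 0)"
proof -
  define n where "n = card B"
  obtain e where e: "bij_betw e {0..<n} B" using ex_bij_betw_nat_finite[OF fin] n_def by blast
  define f where "f = inv_into {0..<n} e"
  have f: "bij_betw f B {0..<n}" using e bij_betw_inv_into f_def by auto
  have ef: "\<And>z. z\<in>B \<Longrightarrow> e (f z) = z" using e f_def by (simp add: bij_betw_inv_into_right)
  have fe: "\<And>i. i<n \<Longrightarrow> f (e i) = i" using e f_def bij_betw_inv_into_left by fastforce
  have fn: "\<And>z. z\<in>B \<Longrightarrow> f z < n" using f by (auto simp: bij_betw_def)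
  have en: "\<And>i. i<n \<Longrightarrow> e i \<in> B" using e by (auto simp: bij_betw_def)
  have finj: "\<And>x y. x\<in>B \<Longrightarrow> y\<in>B \<Longrightarrow> f x = f y \<longleftrightarrow> x = y" using ef by metis
  have sumB: "\<And>F. (\<Sum>z\<in>B. F z) = (\<Sum>i\<in>{0..<n}. F (e i))"
    using sum.reindex_bij_betw[OF e] by metis
  define A where "A = Matrix.mat n n (\<lambda>(i,j). M (e i) (e j))"
  have A: "A \<in> carrier_mat n n" by (simp add: A_def)
  have "Determinant.det A \<noteq> 0"
  proof
    assume "Determinant.det A = 0"
    then obtain v where v: "v \<in> carrier_vec n" "v \<noteq> 0\<^sub>v n" "A *\<^sub>v v = 0\<^sub>v n"
      using det_0_iff_vec_prod_zero[OF A] by blast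
    define h where "h z = v $ f z" for z
    have "\<forall>x\<in>B. (\<Sum>z\<in>B. M x z * h z) = 0"
    proof
      fix x assume x: "x\<in>B"
      have "(\<Sum>z\<in>B. M x z * h z) = (\<Sum>i\<in>{0..<n}. M x (e i) * v $ i)"
        unfolding sumB h_def by (rule sum.cong) (auto simp: fe)
      also have "\<dots> = (A *\<^sub>v v) $ f x"
        using fn[OF x] v(1) by (simp add: A_def scalar_prod_def ef x)
      also have "\<dots> = 0" using v fn[OF x] by simp
      finally show "(\<Sum>z\<in>B. M x z * h z) = 0" .
    qed
    then have h0: "\<forall>x\<in>B. h x = 0" by (rule inj)
    have "v = 0\<^sub>v n"
    proof (rule eq_vecI)
      fix i assume "i < dim_vec (0\<^sub>v n :: real vec)"
      then have i: "i < n" by simp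
      have "v $ i = h (e i)" by (simp add: h_def fe i)
      also have "\<dots> = 0" using h0 en[OF i] by simp
      finally show "v $ i = 0\<^sub>v n $ i" using i by simp
    qed (use v in simp)
    with v show False by simp
  qed
  then have "A \<in> Units (ring_mat TYPE(real) n ())" by (rule det_non_zero_imp_unit[OF A])
  then obtain A' where A': "A' \<in> carrier_mat n n" "A * A' = 1\<^sub>m n"
    by (auto simp: Units_def ring_mat_def)
  define G where "G x y = (if x\<in>B \<and> y\<in>B then A' $$ (f x, f y) else 0)" for x y
  show ?thesis
  proof (intro exI conjI ballI allI impI)
    fix x y assume x: "x\<in>B" and y: "y\<in>B"
    have "(\<Sum>z\<in>B. M x z * G z y) = (\<Sum>i\<in>{0..<n}. M x (e i) * A' $$ (i, f y))"
      unfolding sumB G_def by (rule sum.cong) (auto simp: fe en y)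
    also have "\<dots> = (A * A') $$ (f x, f y)"
      using fn[OF x] fn[OF y] A'(1) by (simp add: A_def scalar_prod_def ef x)
    also have "\<dots> = (if x = y then 1 else 0)"
      using A'(2) fn[OF x] fn[OF y] finj[OF x y] by simp
    finally show "(\<Sum>z\<in>B. M x z * G z y) = (if x = y then 1 else 0)" .
  next
    fix x y :: int assume "x \<notin> B \<or> y \<notin> B"
    then show "G x y = 0" by (auto simp: G_def)
  qed
qed



lemma Lop_diff: "Lop B W (\<lambda>z. f z - g z) x = Lop B W f x - Lop B W g x"
  by (simp add: Lop_def sum_subtractf right_diff_distrib)

lemma compare:
  assumes "finite B" "W \<ge> 1" "\<forall>y\<in>B. Lop B W g y \<le> Lop B W f y"
  shows "\<forall>y\<in>B. g y \<le> f y"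
  using maxprinc[OF assms(1,2), of "\<lambda>z. f z - g z"] assms(3) by (simp add: Lop_diff)

lemma green_prop:
  assumes fin: "finite B" and W: "W \<ge> 1"
  shows "(\<forall>x\<in>B. \<forall>y\<in>B. (\<Sum>z\<in>B. dir_lap W x z * mat_inv_on B (dir_lap W) z y) = (if x = y then 1 else 0))
       \<and> (\<forall>x y. x \<notin> B \<or> y \<notin> B \<longrightarrow> mat_inv_on B (dir_lap W) x y = 0)"
proof -
  let ?P = "\<lambda>G. (\<forall>x\<in>B. \<forall>y\<in>B. (\<Sum>z\<in>B. dir_lap W x z * G z y) = (if x = y then 1 else 0))
                          \<and> (\<forall>x y. x \<notin> B \<or> y \<notin> B \<longrightarrow> G x y = 0)"
  have inj: "\<And>h. \<forall>x\<in>B. (\<Sum>z\<in>B. dir_lap W x z * h z) = 0 \<Longrightarrow> \<forall>x\<in>B. h x = 0"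
    using inj_Lop[OF fin W] unfolding Lop_def by blast
  obtain G where G: "?P G" using inv_exists[OF fin inj] by blast
  have uniq: "G' = G" if G': "?P G'" for G'
  proof (rule ext, rule ext)
    fix x y
    show "G' x y = G x y"
    proof (cases "x \<in> B \<and> y \<in> B")
      case True
      have "\<forall>w\<in>B. Lop B W (\<lambda>z. G' z y - G z y) w = 0"
        using G G' True by (simp add: Lop_diff Lop_def)
      then have "\<forall>w\<in>B. G' w y - G w y = 0" by (rule inj_Lop[OF fin W])
      then show ?thesis using True by simp
    next
      case False then show ?thesis using G G' by auto
    qed
  qed
  have "\<exists>!G. ?P G"
    apply (rule ex1I[of _ G])
    using G uniq by blast+
  then have "?P (THE G. ?P G)" by (rule theI')
  then show ?thesis unfolding mat_inv_on_def .
qed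

lemma dir_lap_sym: "dir_lap W y z = dir_lap W z y"
  by (auto simp: dir_lap_def abs_minus_commute)

lemma green_sym:
  assumes fin: "finite B"
    and P: "\<forall>x\<in>B. \<forall>y\<in>B. (\<Sum>z\<in>B. dir_lap W x z * G z y) = (if x = y then 1 else 0)"
    and a: "a \<in> B" and b: "b \<in> B"
  shows "G a b = G b a"
proof -
  have "G a b = (\<Sum>y\<in>B. if y = a then G y b else 0)"
    using fin a by simp
  also have "\<dots> = (\<Sum>y\<in>B. (\<Sum>z\<in>B. dir_lap W y z * G z a) * G y b)"
    using P a by (intro sum.cong) auto
  also have "\<dots> = (\<Sum>y\<in>B. \<Sum>z\<in>B. G z a * (dir_lap W z y * G y b))"
    unfolding sum_distrib_right
    by (intro sum.cong refl) (metis dir_lap_sym mult.assoc mult.commute)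
  also have "\<dots> = (\<Sum>z\<in>B. \<Sum>y\<in>B. G z a * (dir_lap W z y * G y b))"
    by (rule sum.swap)
  also have "\<dots> = (\<Sum>z\<in>B. if z = b then G z a else 0)"
    using P b by (intro sum.cong) (auto simp: sum_distrib_left[symmetric])
  also have "\<dots> = G b a" using fin b by simp
  finally show ?thesis .
qed

lemma gauss_nat: "(\<Sum>d\<in>{1..int k}. real_of_int d) = real k * (real k + 1) / 2"
proof (induction k)
  case 0 then show ?case by simp
next
  case (Suc k)
  have "{1..int (Suc k)} = insert (int k + 1) {1..int k}" by auto
  then show ?case using Suc by (simp add: field_simps)
qed

lemma gauss_int: "W \<ge> 0 \<Longrightarrow> (\<Sum>d\<in>{1..W}. real_of_int d) = real_of_int W * (real_of_int W + 1) / 2"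
  using gauss_nat[of "nat W"] by simp



lemma up_bound:
  assumes W: "W \<ge> 1" and n: "n \<ge> 0" and Beq: "B = {\<xi>-n..\<xi>+n}" and y: "y \<in> B"
    and fu_def: "fu = (\<lambda>z. real_of_int (W + n - \<bar>z - \<xi>\<bar>) / real_of_int W ^ 2)"
  shows "(if y = \<xi> then 1 else 0) \<le> Lop B W fu y"
proof -
  have fin: "finite B" using Beq by simp
  have Wp: "real_of_int W > 0" using W by simp
  have W0: "W \<ge> 0" using W by simp
  have yb: "\<bar>y - \<xi>\<bar> \<le> n" using y Beq by auto
  define T where "T d = real_of_int (\<bar>y+d-\<xi>\<bar> + \<bar>y-d-\<xi>\<bar> - 2*\<bar>y-\<xi>\<bar>) / real_of_int W ^ 2" for d
  have "(\<Sum>d\<in>{1..W}. T d) \<le> (\<Sum>d\<in>{1..W}. (fu y - ind B fu (y+d)) + (fu y - ind B fu (y-d)))"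
  proof (rule sum_mono)
    fix d assume d: "d \<in> {1..W}"
    have nn: "fu z \<ge> 0" if "\<bar>z - \<xi>\<bar> \<le> n + W" for z
      using that Wp unfolding fu_def by (intro divide_nonneg_pos) auto
    have i1: "ind B fu (y+d) \<le> fu (y+d)" using nn[of "y+d"] yb d by (auto simp: ind_def)
    have i2: "ind B fu (y-d) \<le> fu (y-d)" using nn[of "y-d"] yb d by (auto simp: ind_def)
    have eq: "(fu y - fu (y+d)) + (fu y - fu (y-d)) = T d"
      unfolding fu_def T_def using Wp by (simp add: field_simps)
    show "T d \<le> (fu y - ind B fu (y+d)) + (fu y - ind B fu (y-d))"
      using i1 i2 eq by linarith
  qed
  also have "\<dots> = Lop B W fu y" using lap_expand[OF fin y] W by simp
  finally have L: "(\<Sum>d\<in>{1..W}. T d) \<le> Lop B W fu y" .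
  show ?thesis
  proof (cases "y = \<xi>")
    case True
    have "(\<Sum>d\<in>{1..W}. T d) = (\<Sum>d\<in>{1..W}. real_of_int d * (2 / real_of_int W ^ 2))"
      using True by (intro sum.cong) (auto simp: T_def)
    also have "\<dots> = (\<Sum>d\<in>{1..W}. real_of_int d) * (2 / real_of_int W ^ 2)"
      by (rule sum_distrib_right[symmetric])
    also have "\<dots> = real_of_int W * (real_of_int W + 1) / 2 * (2 / real_of_int W ^ 2)"
      unfolding gauss_int[OF W0] ..
    also have "\<dots> = (real_of_int W + 1) / real_of_int W"
      using Wp by (simp add: field_simps power2_eq_square)
    also have "\<dots> \<ge> 1" using Wp by simp
    finally show ?thesis using L True by simp
  next
    case False
    have "0 \<le> (\<Sum>d\<in>{1..W}. T d)"
    proof (rule sum_nonneg)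
      fix d assume "d \<in> {1..W}"
      have e: "0 \<le> \<bar>y+d-\<xi>\<bar> + \<bar>y-d-\<xi>\<bar> - 2*\<bar>y-\<xi>\<bar>" by (simp add: abs_if)
      have e': "0 \<le> real_of_int (\<bar>y+d-\<xi>\<bar> + \<bar>y-d-\<xi>\<bar> - 2*\<bar>y-\<xi>\<bar>)"
        using e by (simp only: of_int_0_le_iff)
      show "0 \<le> T d" unfolding T_def by (rule divide_nonneg_pos[OF e']) (use Wp in simp)
    qed
    then show ?thesis using L False by simp
  qed
qed

lemma lo_bound:
  assumes W: "W \<ge> 1" and n: "n \<ge> 0" and Beq: "B = {\<xi>-n..\<xi>+n}" and y: "y \<in> B"
    and a_def: "a = 1 / (2 * real_of_int W ^ 3)"
    and s_def: "s = a * real_of_int W * (real_of_int W - 1)"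
    and fl_def: "fl = (\<lambda>z. a * real_of_int (n + 1 - \<bar>z - \<xi>\<bar>) + (if z = \<xi> then s else 0))"
  shows "Lop B W fl y \<le> (if y = \<xi> then 1 else 0)"
proof -
  have fin: "finite B" using Beq by simp
  have Wp: "real_of_int W \<ge> 1" using W by simp
  have W0: "W \<ge> 0" using W by simp
  have a0: "a > 0" using Wp by (simp add: a_def)
  have s0: "s \<ge> 0" using a0 Wp by (simp add: s_def)
  have yb: "\<bar>y - \<xi>\<bar> \<le> n" using y Beq by auto
  define p where "p = y - \<xi>"
  define T where "T d = a * real_of_int (\<bar>p+d\<bar> + \<bar>p-d\<bar> - 2*\<bar>p\<bar>) + (if p = 0 then 2 * s else 0)
               - (if p + d = 0 then s else 0) - (if p - d = 0 then s else 0)" for d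
  have "Lop B W fl y = (\<Sum>d\<in>{1..W}. (fl y - ind B fl (y+d)) + (fl y - ind B fl (y-d)))"
    using lap_expand[OF fin y] W by simp
  also have "\<dots> \<le> (\<Sum>d\<in>{1..W}. T d)"
  proof (rule sum_mono)
    fix d assume d: "d \<in> {1..W}"
    have np: "fl z \<le> 0" if "z \<notin> B" for z
    proof -
      have "\<bar>z - \<xi>\<bar> > n" "z \<noteq> \<xi>" using that Beq n by auto
      then show ?thesis using a0 unfolding fl_def
        by (simp add: mult_nonneg_nonpos less_imp_le)
    qed
    have i1: "fl (y+d) \<le> ind B fl (y+d)" using np[of "y+d"] by (auto simp: ind_def)
    have i2: "fl (y-d) \<le> ind B fl (y-d)" using np[of "y-d"] by (auto simp: ind_def)
    have eq: "(fl y - fl (y+d)) + (fl y - fl (y-d)) = T d"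
      unfolding fl_def p_def T_def by (simp add: algebra_simps)
    show "(fl y - ind B fl (y+d)) + (fl y - ind B fl (y-d)) \<le> T d"
      using i1 i2 eq by linarith
  qed
  finally have L: "Lop B W fl y \<le> (\<Sum>d\<in>{1..W}. T d)" .
  have sd: "(\<Sum>d\<in>{1..W}. real_of_int d) = real_of_int W * (real_of_int W + 1) / 2"
    using W by (intro gauss_int) simp
  have cW: "(\<Sum>d\<in>{1..W}. c) = real_of_int W * c" for c :: real
    using W0 by simp
  show ?thesis
  proof (cases "p = 0")
    case True
    have "(\<Sum>d\<in>{1..W}. T d) = (\<Sum>d\<in>{1..W}. 2 * a * real_of_int d + 2 * s)"
      using True by (intro sum.cong) (auto simp: T_def)
    also have "\<dots> = 2 * a * (real_of_int W * (real_of_int W + 1) / 2) + real_of_int W * (2 * s)"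
      unfolding sum.distrib sum_distrib_left[of "2 * a" real_of_int "{1..W}", symmetric] sd cW ..
    also have "\<dots> = (real_of_int W * real_of_int W + real_of_int W + 2 * real_of_int W ^ 2 * (real_of_int W - 1)) / (2 * real_of_int W ^ 3)"
    proof -
      have "2 * a * (real_of_int W * (real_of_int W + 1) / 2) + real_of_int W * (2 * s)
          = a * (real_of_int W * real_of_int W + real_of_int W + 2 * real_of_int W ^ 2 * (real_of_int W - 1))"
        unfolding s_def by (simp add: algebra_simps power2_eq_square)
      also have "\<dots> = (real_of_int W * real_of_int W + real_of_int W + 2 * real_of_int W ^ 2 * (real_of_int W - 1)) / (2 * real_of_int W ^ 3)"
        unfolding a_def by simp
      finally show ?thesis .
    qed
    also have "\<dots> \<le> 1"
    proof -
      have "real_of_int W \<le> real_of_int W * real_of_int W" using Wp by (simp add: mult_le_cancel_left1)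
      then have "real_of_int W * real_of_int W + real_of_int W + 2 * real_of_int W ^ 2 * (real_of_int W - 1) \<le> 2 * real_of_int W ^ 3"
        by (simp add: power2_eq_square power3_eq_cube algebra_simps)
      moreover have pos: "0 < 2 * real_of_int W ^ 3" using Wp by simp
      ultimately show ?thesis by (subst divide_le_eq_1_pos[OF pos])
    qed
    finally have S: "(\<Sum>d\<in>{1..W}. T d) \<le> 1" .
    from True p_def have "y = \<xi>" by linarith
    then have eq1: "(if y = \<xi> then 1 else 0) = (1::real)" by simp
    have LS: "Lop B W fl y \<le> 1" using L S by (rule order_trans)
    show ?thesis unfolding eq1 by (rule LS)
  next
    case False
    show ?thesis
    proof (cases "\<bar>p\<bar> \<le> W")
      case True
      have "(\<Sum>d\<in>{1..W}. T d) \<le> (\<Sum>d\<in>{1..W}. 2 * a * (real_of_int d - 1) - (if d = \<bar>p\<bar> then s else 0))"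
      proof (rule sum_mono)
        fix d assume d: "d \<in> {1..W}"
        have d1: "1 \<le> d" using d by simp
        have E: "\<bar>p+d\<bar> + \<bar>p-d\<bar> - 2*\<bar>p\<bar> \<le> 2*(d-1)" using d1 False by (simp add: abs_if)
        have aE: "a * real_of_int (\<bar>p+d\<bar> + \<bar>p-d\<bar> - 2*\<bar>p\<bar>) \<le> a * (2 * (real_of_int d - 1))"
        proof -
          have "real_of_int (\<bar>p+d\<bar> + \<bar>p-d\<bar> - 2*\<bar>p\<bar>) \<le> real_of_int (2*(d-1))"
            using E by (simp only: of_int_le_iff)
          then have E': "real_of_int (\<bar>p+d\<bar> + \<bar>p-d\<bar> - 2*\<bar>p\<bar>) \<le> 2 * (real_of_int d - 1)"
            by simp
          show ?thesis by (rule mult_left_mono[OF E']) (use a0 in simp)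
        qed
        show "T d \<le> 2 * a * (real_of_int d - 1) - (if d = \<bar>p\<bar> then s else 0)"
        proof -
          have i: "(if p = 0 then 2 * s else 0) - (if p + d = 0 then s else 0) - (if p - d = 0 then s else 0)
                 \<le> - (if d = \<bar>p\<bar> then s else 0)"
            using False d s0 by (auto simp: abs_if)
          have aE2: "a * real_of_int (\<bar>p+d\<bar> + \<bar>p-d\<bar> - 2*\<bar>p\<bar>) \<le> 2 * a * (real_of_int d - 1)"
            using aE by (simp add: algebra_simps)
          show ?thesis using i aE2 unfolding T_def by linarith
        qed
      qed
      also have "\<dots> = 2 * a * (\<Sum>d\<in>{1..W}. real_of_int d) - 2 * a * real_of_int W - s"
      proof -
        have e1: "(\<Sum>d\<in>{1..W}. 2 * a * (real_of_int d - 1)) = 2 * a * (\<Sum>d\<in>{1..W}. real_of_int d) - real_of_int W * (2 * a)"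
          unfolding right_diff_distrib mult_1_right sum_subtractf sum_distrib_left[of "2 * a" real_of_int "{1..W}", symmetric] cW[of "2 * a"] ..
        have pin: "\<bar>p\<bar> \<in> {1..W}" using True False by auto
        have e2: "(\<Sum>d\<in>{1..W}. if d = \<bar>p\<bar> then s else 0) = s" using pin by simp
        show ?thesis unfolding sum_subtractf e1 e2 by (simp add: algebra_simps)
      qed
      also have "\<dots> = 0"
        unfolding sd s_def by (simp add: field_simps)
      finally have S: "(\<Sum>d\<in>{1..W}. T d) \<le> 0" .
      from False p_def have "y \<noteq> \<xi>" by linarith
      then have eq1: "(if y = \<xi> then 1 else 0) = (0::real)" by simp
      have LS: "Lop B W fl y \<le> 0" using L S by (rule order_trans)
      show ?thesis unfolding eq1 by (rule LS)
    next
      case False2: False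
      have "(\<Sum>d\<in>{1..W}. T d) = (\<Sum>d\<in>{1..W}. 0)"
      proof (intro sum.cong refl)
        fix d assume d: "d \<in> {1..W}"
        have d2: "d \<le> W" "1 \<le> d" using d by simp_all
        have "\<bar>p+d\<bar> + \<bar>p-d\<bar> - 2*\<bar>p\<bar> = 0" using d2 False2 by (auto simp: abs_if split: if_splits)
        then show "T d = 0" using d False2 False by (auto simp: T_def)
      qed
      then have S: "(\<Sum>d\<in>{1..W}. T d) \<le> 0" by simp
      from False p_def have "y \<noteq> \<xi>" by linarith
      then have eq1: "(if y = \<xi> then 1 else 0) = (0::real)" by simp
      have LS: "Lop B W fl y \<le> 0" using L S by (rule order_trans)
      show ?thesis unfolding eq1 by (rule LS)
    qed
  qed
qed



theorem lemmaB1: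
  fixes W r \<xi> :: int
  assumes "W \<ge> 1" and "r \<ge> 1"
  shows "(\<forall>x\<in>band_ball W r \<xi>.
            1 / (2 * real_of_int W ^ 3) * real_of_int (r * W + 1 - \<bar>x - \<xi>\<bar>) \<le> green W r \<xi> \<xi> x
          \<and> green W r \<xi> \<xi> x \<le> 1 / real_of_int W ^ 2 * real_of_int (W + r * W - \<bar>x - \<xi>\<bar>))
       \<and> (\<forall>x\<in>band_boundary W r \<xi>.
            1 / (2 * real_of_int W ^ 3) \<le> poisson W r \<xi> x \<and> poisson W r \<xi> x \<le> 1)"
proof -
  have W1: "W \<ge> 1" using assms by simp
  define n where "n = r * W"
  define B where "B = band_ball W r \<xi>"
  have n0: "n \<ge> W" using mult_right_mono[of 1 r W] assms unfolding n_def by simp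
  have nn: "n \<ge> 0" using n0 W1 by simp
  have Beq: "B = {\<xi>-n..\<xi>+n}" unfolding B_def band_ball_def n_def by (auto simp: abs_le_iff)
  have fin: "finite B" by (simp add: Beq)
  have xiB: "\<xi> \<in> B" using nn by (simp add: Beq)
  define G where "G = green W r \<xi>"
  have GP: "(\<forall>x\<in>B. \<forall>y\<in>B. (\<Sum>z\<in>B. dir_lap W x z * G z y) = (if x = y then 1 else 0))
       \<and> (\<forall>x y. x \<notin> B \<or> y \<notin> B \<longrightarrow> G x y = 0)"
    unfolding G_def green_def B_def[symmetric] by (rule green_prop[OF fin W1])
  have P: "\<forall>x\<in>B. \<forall>y\<in>B. (\<Sum>z\<in>B. dir_lap W x z * G z y) = (if x = y then 1 else 0)"
    using GP by blast
  define u where "u z = G z \<xi>" for z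
  have Lu: "\<And>y. y\<in>B \<Longrightarrow> Lop B W u y = (if y = \<xi> then 1 else 0)"
    using P xiB by (simp add: Lop_def u_def)
  define fu where "fu = (\<lambda>z. real_of_int (W + n - \<bar>z - \<xi>\<bar>) / real_of_int W ^ 2)"
  have up: "\<forall>y\<in>B. u y \<le> fu y"
    by (rule compare[OF fin W1]) (use Lu up_bound[OF W1 nn Beq _ fu_def] in simp)
  define a where "a = 1 / (2 * real_of_int W ^ 3)"
  define s where "s = a * real_of_int W * (real_of_int W - 1)"
  define fl where "fl = (\<lambda>z. a * real_of_int (n + 1 - \<bar>z - \<xi>\<bar>) + (if z = \<xi> then s else 0))"
  have lo: "\<forall>y\<in>B. fl y \<le> u y"
    by (rule compare[OF fin W1]) (use Lu lo_bound[OF W1 nn Beq _ a_def s_def fl_def] in simp)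
  have Wp: "real_of_int W \<ge> 1" using W1 by simp
  have a0: "a > 0" using Wp by (simp add: a_def)
  have s0: "s \<ge> 0" using a0 Wp by (simp add: s_def)
  have flb: "a * real_of_int (n + 1 - \<bar>y - \<xi>\<bar>) \<le> u y" if "y \<in> B" for y
  proof -
    have "a * real_of_int (n + 1 - \<bar>y - \<xi>\<bar>) \<le> fl y" using s0 by (simp add: fl_def)
    then show ?thesis using lo that by force
  qed
  have gx: "green W r \<xi> \<xi> x = u x" if "x \<in> B" for x
    using green_sym[OF fin P xiB that] by (simp add: u_def G_def)
  have part1: "\<forall>x\<in>band_ball W r \<xi>.
            1 / (2 * real_of_int W ^ 3) * real_of_int (r * W + 1 - \<bar>x - \<xi>\<bar>) \<le> green W r \<xi> \<xi> x
          \<and> green W r \<xi> \<xi> x \<le> 1 / real_of_int W ^ 2 * real_of_int (W + r * W - \<bar>x - \<xi>\<bar>)"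
  proof
    fix x assume "x \<in> band_ball W r \<xi>"
    then have x: "x \<in> B" by (simp add: B_def)
    have l: "1 / (2 * real_of_int W ^ 3) * real_of_int (r * W + 1 - \<bar>x - \<xi>\<bar>) \<le> u x"
      using flb[OF x] by (simp add: a_def n_def)
    have "u x \<le> fu x" using up x by blast
    then have h: "u x \<le> 1 / real_of_int W ^ 2 * real_of_int (W + r * W - \<bar>x - \<xi>\<bar>)"
      by (simp add: fu_def n_def)
    show "1 / (2 * real_of_int W ^ 3) * real_of_int (r * W + 1 - \<bar>x - \<xi>\<bar>) \<le> green W r \<xi> \<xi> x
          \<and> green W r \<xi> \<xi> x \<le> 1 / real_of_int W ^ 2 * real_of_int (W + r * W - \<bar>x - \<xi>\<bar>)"
      using l h gx[OF x] by simp
  qed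
  have part2: "\<forall>x\<in>band_boundary W r \<xi>.
            1 / (2 * real_of_int W ^ 3) \<le> poisson W r \<xi> x \<and> poisson W r \<xi> x \<le> 1"
  proof
    fix x assume "x \<in> band_boundary W r \<xi>"
    then have hx: "n < \<bar>x - \<xi>\<bar>" "\<bar>x - \<xi>\<bar> \<le> n + W"
      by (auto simp: band_boundary_def n_def algebra_simps)
    define N where "N = {y\<in>B. 0 < \<bar>x - y\<bar> \<and> \<bar>x - y\<bar> \<le> W}"
    have pois: "poisson W r \<xi> x = (\<Sum>y\<in>N. G \<xi> y)"
      unfolding poisson_def N_def B_def G_def ..
    have NB: "N \<subseteq> B" by (auto simp: N_def)
    have finN: "finite N" using NB fin finite_subset by blast
    have xnB: "x \<notin> B" using hx Beq by auto
    have Gnn: "\<forall>y\<in>N. 0 \<le> G \<xi> y"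
    proof
      fix y assume "y \<in> N"
      then have y: "y \<in> B" using NB by blast
      have "\<bar>y - \<xi>\<bar> \<le> n" using y Beq by auto
      then have "0 \<le> a * real_of_int (n + 1 - \<bar>y - \<xi>\<bar>)" using a0 by simp
      also have "\<dots> \<le> u y" by (rule flb[OF y])
      finally show "0 \<le> G \<xi> y" using gx[OF y] by (simp add: G_def)
    qed
    define y0 where "y0 = (if x > \<xi> then \<xi> + n else \<xi> - n)"
    have y0B: "y0 \<in> B" using nn by (auto simp: y0_def Beq)
    have y0N: "y0 \<in> N" using y0B hx W1 unfolding N_def y0_def by (auto split: if_splits)
    have "a = a * real_of_int (n + 1 - \<bar>y0 - \<xi>\<bar>)" using nn by (simp add: y0_def)
    also have "\<dots> \<le> u y0" by (rule flb[OF y0B])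
    also have "\<dots> = G \<xi> y0" using gx[OF y0B] by (simp add: G_def)
    also have "\<dots> \<le> (\<Sum>y\<in>N. G \<xi> y)"
      by (rule member_le_sum[OF y0N]) (use Gnn finN in auto)
    finally have lower: "1 / (2 * real_of_int W ^ 3) \<le> poisson W r \<xi> x"
      using pois by (simp add: a_def)
    define v where "v y = (\<Sum>z\<in>N. G y z)" for y
    have Lv: "Lop B W v y = (if y \<in> N then 1 else 0)" if y: "y \<in> B" for y
    proof -
      have "Lop B W v y = (\<Sum>w\<in>B. dir_lap W y w * (\<Sum>z\<in>N. G w z))"
        unfolding Lop_def v_def ..
      also have "\<dots> = (\<Sum>w\<in>B. \<Sum>z\<in>N. dir_lap W y w * G w z)"
        unfolding sum_distrib_left ..
      also have "\<dots> = (\<Sum>z\<in>N. \<Sum>w\<in>B. dir_lap W y w * G w z)" by (rule sum.swap)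
      also have "\<dots> = (\<Sum>z\<in>N. if y = z then 1 else 0)"
        using P y NB by (intro sum.cong) auto
      also have "\<dots> = (if y \<in> N then 1 else 0)" using finN by simp
      finally show ?thesis .
    qed
    have L1: "Lop B W v y \<le> Lop B W (\<lambda>_. 1) y" if y: "y \<in> B" for y
    proof -
      let ?t = "\<lambda>d. (1 - ind B (\<lambda>_. 1) (y+d)) + (1 - ind B (\<lambda>_. 1) (y-d))"
      have e: "Lop B W (\<lambda>_. 1) y = (\<Sum>d\<in>{1..W}. ?t d)" using lap_expand[OF fin y] W1 by simp
      have tnn: "\<forall>d. 0 \<le> ?t d" by (simp add: ind_def)
      show ?thesis
      proof (cases "y \<in> N")
        case True
        define d0 where "d0 = \<bar>x - y\<bar>"
        have d0: "d0 \<in> {1..W}" using True by (auto simp: N_def d0_def)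
        have "x = y + d0 \<or> x = y - d0" by (auto simp: d0_def abs_if)
        then have "1 \<le> ?t d0" using xnB by (auto simp: ind_def)
        also have "\<dots> \<le> (\<Sum>d\<in>{1..W}. ?t d)"
          by (rule member_le_sum[OF d0]) (use tnn in auto)
        finally show ?thesis using Lv[OF y] True e by simp
      next
        case False
        have "0 \<le> (\<Sum>d\<in>{1..W}. ?t d)" using tnn by (simp add: sum_nonneg)
        then show ?thesis using Lv[OF y] False e by simp
      qed
    qed
    have "\<forall>y\<in>B. v y \<le> 1"
      using compare[OF fin W1, of v "\<lambda>_. 1"] L1 by simp
    then have "v \<xi> \<le> 1" using xiB by blast
    then have upper: "poisson W r \<xi> x \<le> 1" using pois by (simp add: v_def)
    show "1 / (2 * real_of_int W ^ 3) \<le> poisson W r \<xi> x \<and> poisson W r \<xi> x \<le> 1"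
      using lower upper by simp
  qed
  show ?thesis using part1 part2 by blast
qed


end
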